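(* Let $mG$ be a finite canonical misinformation game, $\Gamma=(\mathcal{AD}^*(\{mG\}),E)$ its adaptation graph, $\Gamma'$ its loopless version, and let $K=\{mG'\in\mathcal{AD}^*(\{mG\}): d^+_{\Gamma'}(mG')=0\}$ be the set of sink nodes of $\Gamma'$. Then $K\subseteq\mathcal{T}$, where $\mathcal{T}$ is the terminal set of the Adaptation Procedure on $mG$. Moreover, every natural misinformed equilibrium of any $mG'\in K$ is a stable misinformed equilibrium of $mG$.
   Context: A normal-form game is $G=\langle N,S,P\rangle$ with finite players $N$, finite pure strategy sets $S_i$, positions $S=\times_i S_i$, payoffs $P_i:S\to\mathbb{R}$. A misinformation game $mG=\langle G^0,G^1,\dots,G^{|N|}\rangle$ consists of the actual game $G^0$ and subjective games $G^i$; it is canonical if all $G^i=\langle N,S,P^i\rangle$ differ from $G^0$ only in payoffs and in every $G^i$ all players have equally many pure strategies. $NME(mG)$ (natural misinformed equilibria) is the set of profiles $\sigma=(\sigma_1,\dots,\sigma_{|N|})$ such that each $\sigma_i$ is player $i$'s component of some Nash equilibrium of $G^i$. $\chi(\sigma)=\mathrm{supp}(\sigma_1)\times\dots\times\mathrm{supp}(\sigma_{|N|})$. For $\vec v\in S$, $mG_{\vec v}$ is obtained by replacing, in every $P^i$ ($i\ge1$), the payoff vector at position $\vec v$ by $P^0(\vec v)$. For a set $M$ of misinformation games, $\mathcal{AD}(M)=\{mG_{\vec u}: mG\in M,\sigma\in NME(mG),\vec u\in\chi(\sigma)\}$, $\mathcal{AD}^{(0)}(M)=M$, $\mathcal{AD}^{(t+1)}(M)=\mathcal{AD}^{(t)}(\mathcal{AD}(M))$,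 $\mathcal{AD}^*(M)=\bigcup_{t\ge0}\mathcal{AD}^{(t)}(M)$; the length $\mathfrak{L}$ is the least $t\ge0$ with $\mathcal{AD}^{(t+1)}(M)=\mathcal{AD}^{(t)}(M)$ and $\mathcal{AD}^\infty(M)=\mathcal{AD}^{(\mathfrak{L})}(M)$. The terminal set is $\mathcal{T}=\{mG'\in\mathcal{AD}^*(\{mG\}): mG'\in\mathcal{AD}(\{mG'\})\}$. A profile $\sigma$ is a stable misinformed equilibrium of $mG$ if there is $\widehat{mG}\in\mathcal{AD}^\infty(\{mG\})$ with $\sigma\in NME(\widehat{mG})$ and $\widehat{mG}_{\vec v}=\widehat{mG}$ for all $\vec v\in\chi(\sigma)$. The adaptation graph $\Gamma$ has vertex set $\mathcal{AD}^*(\{mG\})$ and an edge $(mG^1,mG^2)$ iff $mG^2=(mG^1)_{\vec v}$ for some $\sigma\in NME(mG^1)$, $\vec v\in\chi(\sigma)$; $\Gamma'$ is $\Gamma$ with self-loops removed; $d^+_{\Gamma'}$ denotes out-degree in $\Gamma'$. *)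

theory Defs
  imports Complex_Main "HOL-Library.FuncSet"
begin

text \<open>
  A finite canonical misinformation game with n players (players 0..<n) where
  player i has the pure strategies {0..<s i}.  All component games share the
  player set and the strategy sets (canonical), so a misinformation game is
  represented by its payoff functions: mG k v j is the payoff of player j at
  position v in game G^k, for k = 0 (actual game) and k = 1..n (subjective
  game of player k-1, i.e. players are numbered from 0).
\<close>

type_synonym mgame = "nat \<Rightarrow> (nat \<Rightarrow> nat) \<Rightarrow> nat \<Rightarrow> real"

definition positions :: "nat \<Rightarrow> (nat \<Rightarrow> nat) \<Rightarrow> (nat \<Rightarrow> nat) set" where
  "positions n s = PiE {..<n} (\<lambda>i. {..<s i})"

definition mixed_strategy :: "nat \<Rightarrow> (nat \<Rightarrow> real) \<Rightarrow> bool" where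
  "mixed_strategy m p \<longleftrightarrow> (\<forall>a. 0 \<le> p a) \<and> (\<forall>a. m \<le> a \<longrightarrow> p a = 0) \<and> (\<Sum>a<m. p a) = 1"

definition profile :: "nat \<Rightarrow> (nat \<Rightarrow> nat) \<Rightarrow> (nat \<Rightarrow> nat \<Rightarrow> real) \<Rightarrow> bool" where
  "profile n s \<sigma> \<longleftrightarrow> (\<forall>i<n. mixed_strategy (s i) (\<sigma> i)) \<and> (\<forall>i. n \<le> i \<longrightarrow> \<sigma> i = (\<lambda>_. 0))"

definition exp_payoff :: "nat \<Rightarrow> (nat \<Rightarrow> nat) \<Rightarrow> ((nat \<Rightarrow> nat) \<Rightarrow> nat \<Rightarrow> real)
    \<Rightarrow> (nat \<Rightarrow> nat \<Rightarrow> real) \<Rightarrow> nat \<Rightarrow> real" where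
  "exp_payoff n s P \<sigma> j = (\<Sum>v\<in>positions n s. (\<Prod>i<n. \<sigma> i (v i)) * P v j)"

definition nash :: "nat \<Rightarrow> (nat \<Rightarrow> nat) \<Rightarrow> ((nat \<Rightarrow> nat) \<Rightarrow> nat \<Rightarrow> real)
    \<Rightarrow> (nat \<Rightarrow> nat \<Rightarrow> real) \<Rightarrow> bool" where
  "nash n s P \<sigma> \<longleftrightarrow> profile n s \<sigma> \<and>
     (\<forall>i<n. \<forall>\<tau>. mixed_strategy (s i) \<tau> \<longrightarrow>
        exp_payoff n s P (\<sigma>(i := \<tau>)) i \<le> exp_payoff n s P \<sigma> i)"

definition NME :: "nat \<Rightarrow> (nat \<Rightarrow> nat) \<Rightarrow> mgame \<Rightarrow> (nat \<Rightarrow> nat \<Rightarrow> real) set" where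
  "NME n s mG = {\<sigma>. profile n s \<sigma> \<and>
     (\<forall>i<n. \<exists>\<tau>. nash n s (mG (Suc i)) \<tau> \<and> \<sigma> i = \<tau> i)}"

definition supp :: "nat \<Rightarrow> (nat \<Rightarrow> real) \<Rightarrow> nat set" where
  "supp m p = {a. a < m \<and> p a \<noteq> 0}"

definition chi :: "nat \<Rightarrow> (nat \<Rightarrow> nat) \<Rightarrow> (nat \<Rightarrow> nat \<Rightarrow> real) \<Rightarrow> (nat \<Rightarrow> nat) set" where
  "chi n s \<sigma> = PiE {..<n} (\<lambda>i. supp (s i) (\<sigma> i))"

definition upd :: "nat \<Rightarrow> mgame \<Rightarrow> (nat \<Rightarrow> nat) \<Rightarrow> mgame" where
  "upd n mG v = (\<lambda>k w j. if 1 \<le> k \<and> k \<le> n \<and> w = v then mG 0 v j else mG k w j)"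

definition AD :: "nat \<Rightarrow> (nat \<Rightarrow> nat) \<Rightarrow> mgame set \<Rightarrow> mgame set" where
  "AD n s M = {upd n g u | g \<sigma> u. g \<in> M \<and> \<sigma> \<in> NME n s g \<and> u \<in> chi n s \<sigma>}"

fun ADn :: "nat \<Rightarrow> (nat \<Rightarrow> nat) \<Rightarrow> nat \<Rightarrow> mgame set \<Rightarrow> mgame set" where
  "ADn n s 0 M = M"
| "ADn n s (Suc t) M = ADn n s t (AD n s M)"

definition ADstar :: "nat \<Rightarrow> (nat \<Rightarrow> nat) \<Rightarrow> mgame set \<Rightarrow> mgame set" where
  "ADstar n s M = (\<Union>t. ADn n s t M)"

definition ADlength :: "nat \<Rightarrow> (nat \<Rightarrow> nat) \<Rightarrow> mgame set \<Rightarrow> nat" where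
  "ADlength n s M = (LEAST t. ADn n s (Suc t) M = ADn n s t M)"

definition ADinf :: "nat \<Rightarrow> (nat \<Rightarrow> nat) \<Rightarrow> mgame set \<Rightarrow> mgame set" where
  "ADinf n s M = ADn n s (ADlength n s M) M"

definition terminal_set :: "nat \<Rightarrow> (nat \<Rightarrow> nat) \<Rightarrow> mgame \<Rightarrow> mgame set" where
  "terminal_set n s mG = {g \<in> ADstar n s {mG}. g \<in> AD n s {g}}"

definition stable_eq :: "nat \<Rightarrow> (nat \<Rightarrow> nat) \<Rightarrow> mgame \<Rightarrow> (nat \<Rightarrow> nat \<Rightarrow> real) \<Rightarrow> bool" where
  "stable_eq n s mG \<sigma> \<longleftrightarrow> (\<exists>g\<in>ADinf n s {mG}. \<sigma> \<in> NME n s g \<and> (\<forall>v\<in>chi n s \<sigma>. upd n g v = g))"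

text \<open>Adaptation graph: vertices ADstar {mG}, edges (g1,g2) iff g2 = (g1)_v for
  some \<sigma> \<in> NME g1 and v \<in> chi \<sigma>.\<close>
definition adapt_edge :: "nat \<Rightarrow> (nat \<Rightarrow> nat) \<Rightarrow> mgame \<Rightarrow> mgame \<Rightarrow> bool" where
  "adapt_edge n s g1 g2 \<longleftrightarrow> (\<exists>\<sigma> v. \<sigma> \<in> NME n s g1 \<and> v \<in> chi n s \<sigma> \<and> g2 = upd n g1 v)"

definition out_nbrs' :: "nat \<Rightarrow> (nat \<Rightarrow> nat) \<Rightarrow> mgame \<Rightarrow> mgame \<Rightarrow> mgame set" where
  "out_nbrs' n s mG g = {g2 \<in> ADstar n s {mG}. adapt_edge n s g g2 \<and> g2 \<noteq> g}"

definition out_degree' :: "nat \<Rightarrow> (nat \<Rightarrow> nat) \<Rightarrow> mgame \<Rightarrow> mgame \<Rightarrow> nat" where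
  "out_degree' n s mG g = card (out_nbrs' n s mG g)"

definition sinks :: "nat \<Rightarrow> (nat \<Rightarrow> nat) \<Rightarrow> mgame \<Rightarrow> mgame set" where
  "sinks n s mG = {g \<in> ADstar n s {mG}. out_degree' n s mG g = 0}"

end

theory Submission
  imports Defs "HOL-Analysis.Analysis"
begin


lemma coord_cont [continuous_intros]: "continuous_on S (\<lambda>x::nat\<Rightarrow>real. x i)"
  by (rule continuous_on_subset[OF continuous_on_product_coordinates]) simp

lemma tendsto_fun_coord:
  fixes X :: "'a \<Rightarrow> nat \<Rightarrow> real"
  assumes "\<And>i. ((\<lambda>k. X k i) \<longlongrightarrow> l i) F"
  shows "(X \<longlongrightarrow> l) F"
proof -
  have "limitin (product_topology (\<lambda>i. euclidean) UNIV) X l F"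
    unfolding limitin_componentwise using assms by simp
  then show ?thesis by (simp add: euclidean_product_topology)
qed

lemma tendsto_coord:
  fixes X :: "'a \<Rightarrow> nat \<Rightarrow> real"
  assumes "(X \<longlongrightarrow> l) F"
  shows "((\<lambda>k. X k i) \<longlongrightarrow> l i) F"
  using continuous_on_tendsto_compose[OF coord_cont[of UNIV i] assms] by simp

definition cube :: "nat \<Rightarrow> (nat \<Rightarrow> real) set" where
  "cube N = {x::nat\<Rightarrow>real. \<forall>i. (i<N \<longrightarrow> 0 \<le> x i \<and> x i \<le> 1) \<and> (N \<le> i \<longrightarrow> x i = 0)}"

lemma compact_cube0:
  "compact {x::nat\<Rightarrow>real. \<forall>i. (i<N \<longrightarrow> 0 \<le> x i \<and> x i \<le> 1) \<and> (N \<le> i \<longrightarrow> x i = 0)}"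
proof -
  have eq: "{x::nat\<Rightarrow>real. \<forall>i. (i<N \<longrightarrow> 0 \<le> x i \<and> x i \<le> 1) \<and> (N \<le> i \<longrightarrow> x i = 0)}
     = PiE UNIV (\<lambda>i. if i < N then {0..1} else {0})"
    apply (rule set_eqI)
    apply (simp add: PiE_iff)
    by (metis atLeastAtMost_iff not_less singletonD singletonI)
  have "compactin (product_topology (\<lambda>i. euclidean) UNIV) (PiE UNIV (\<lambda>i. if i < N then {0..1::real} else {0}))"
    unfolding compactin_PiE by simp
  then show ?thesis unfolding eq euclidean_product_topology by simp
qed


lemma compact_cube: "compact (cube N)"
  unfolding cube_def by (rule compact_cube0)

lemma near_lim:
  fixes X :: "nat \<Rightarrow> nat \<Rightarrow> real"
  assumes lim: "(Z \<circ> \<phi>) \<longlonglongrightarrow> l" and sm: "strict_mono \<phi>"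
    and near: "\<And>k j. \<bar>X k j - Z (\<phi> k) j\<bar> \<le> 1 / real (Suc (\<phi> k))"
  shows "X \<longlonglongrightarrow> l"
proof (rule tendsto_fun_coord)
  fix j
  have l1: "(\<lambda>k. Z (\<phi> k) j) \<longlonglongrightarrow> l j"
    using tendsto_coord[OF lim, of j] by (simp add: o_def)
  have l2: "(\<lambda>k. X k j - Z (\<phi> k) j) \<longlonglongrightarrow> 0"
  proof (rule Lim_null_comparison)
    show "\<forall>\<^sub>F k in sequentially. norm (X k j - Z (\<phi> k) j) \<le> inverse (real (Suc k))"
    proof (rule always_eventually, rule allI)
      fix k
      have "k \<le> \<phi> k" using seq_suble[OF sm] by simp
      then have "1 / real (Suc (\<phi> k)) \<le> inverse (real (Suc k))"
        by (simp add: divide_inverse le_imp_inverse_le)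
      then show "norm (X k j - Z (\<phi> k) j) \<le> inverse (real (Suc k))"
        using near[of k j] by simp
    qed
    show "(\<lambda>k. inverse (real (Suc k))) \<longlonglongrightarrow> 0" by (rule LIMSEQ_inverse_real_of_nat)
  qed
  have "(\<lambda>k. Z (\<phi> k) j + (X k j - Z (\<phi> k) j)) \<longlonglongrightarrow> l j + 0"
    by (rule tendsto_add[OF l1 l2])
  then show "(\<lambda>k. X k j) \<longlonglongrightarrow> l j" by simp
qed

lemma approx_fix:
  fixes f :: "(nat \<Rightarrow> real) \<Rightarrow> nat \<Rightarrow> real" and N p :: nat
  assumes fC: "\<And>x i. x \<in> cube N \<Longrightarrow> i < N \<Longrightarrow> 0 \<le> f x i \<and> f x i \<le> 1"
    and p: "0 < p"
  shows "\<exists>z\<in>cube N. \<forall>i<N. \<exists>a\<in>cube N. \<exists>b\<in>cube N. (\<forall>j. \<bar>a j - z j\<bar> \<le> 1 / real p)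
     \<and> (\<forall>j. \<bar>b j - z j\<bar> \<le> 1 / real p) \<and> a i \<le> f a i \<and> f b i \<le> b i"
proof -
  define pt where "pt x = (\<lambda>j. if j < N then real (x j) / real p else 0)" for x :: "nat \<Rightarrow> nat"
  have ptC: "pt x \<in> cube N" if "\<forall>j<N. x j \<le> p" for x
    using that p by (auto simp: cube_def pt_def)
  define label where "label x i = (if x i = 0 then 0 else if x i = p then 1
      else if pt x i \<le> f (pt x) i then 0 else (1::nat))" for x :: "nat \<Rightarrow> nat" and i
  have L0: "pt x i \<le> f (pt x) i" if "\<forall>j<N. x j \<le> p" "i < N" "label x i = 0" for x i
  proof (cases "x i = 0")
    case True
    then show ?thesis using fC[OF ptC[OF that(1)] that(2)] that(2) by (simp add: pt_def)
  next
    case False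
    then show ?thesis using that p by (auto simp: label_def split: if_splits)
  qed
  have L1: "f (pt x) i \<le> pt x i" if "\<forall>j<N. x j \<le> p" "i < N" "label x i = 1" for x i
  proof (cases "x i = p")
    case True
    then show ?thesis using fC[OF ptC[OF that(1)] that(2)] that(2) p by (simp add: pt_def)
  next
    case False
    then show ?thesis using that p by (auto simp: label_def split: if_splits)
  qed
  have k1: "\<forall>x. (\<forall>i<N. x i \<le> p) \<longrightarrow> (\<forall>i<N. label x i = (0::nat) \<or> label x i = 1)"
    by (simp add: label_def)
  have k2: "\<forall>x. (\<forall>i<N. x i \<le> p) \<longrightarrow> (\<forall>i<N. x i = 0 \<longrightarrow> label x i = 0)"
    by (simp add: label_def)
  have k3: "\<forall>x. (\<forall>i<N. x i \<le> p) \<longrightarrow> (\<forall>i<N. x i = p \<longrightarrow> label x i = 1)"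
    using p by (simp add: label_def)
  obtain q where q1: "\<forall>i<N. q i < p"
    and q2: "\<forall>i<N. \<exists>r s. (\<forall>j<N. q j \<le> r j \<and> r j \<le> q j + 1) \<and> (\<forall>j<N. q j \<le> s j \<and> s j \<le> q j + 1) \<and> label r i \<noteq> label s i"
    using kuhn_lemma[OF p k1 k2 k3] by blast
  have close: "(\<forall>j<N. x j \<le> p) \<and> (\<forall>j. \<bar>pt x j - pt q j\<bar> \<le> 1 / real p)"
    if "\<forall>j<N. q j \<le> x j \<and> x j \<le> q j + 1" for x
  proof
    show "\<forall>j<N. x j \<le> p" using that q1 by (metis Suc_eq_plus1 Suc_leI le_trans)
    show "\<forall>j. \<bar>pt x j - pt q j\<bar> \<le> 1 / real p"
    proof
      fix j
      show "\<bar>pt x j - pt q j\<bar> \<le> 1 / real p"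
      proof (cases "j < N")
        case True
        have "\<bar>real (x j) - real (q j)\<bar> \<le> 1" using that True by auto
        then have "\<bar>real (x j) - real (q j)\<bar> / real p \<le> 1 / real p"
          using p by (simp add: divide_right_mono)
        then show ?thesis using True p by (simp add: pt_def diff_divide_distrib[symmetric])
      qed (simp add: pt_def)
    qed
  qed
  have qC: "pt q \<in> cube N" using ptC q1 by (simp add: less_imp_le)
  show ?thesis
  proof (rule bexI[OF _ qC], intro allI impI)
    fix i assume i: "i < N"
    obtain r s where r: "\<forall>j<N. q j \<le> r j \<and> r j \<le> q j + 1" and s: "\<forall>j<N. q j \<le> s j \<and> s j \<le> q j + 1"
      and rs: "label r i \<noteq> label s i"
      using q2 i by blast
    note cr = close[OF r] and cs = close[OF s]
    have lr: "label r i = 0 \<or> label r i = 1" and ls: "label s i = 0 \<or> label s i = 1"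
      using k1 cr cs i by blast+
    show "\<exists>a\<in>cube N. \<exists>b\<in>cube N. (\<forall>j. \<bar>a j - pt q j\<bar> \<le> 1 / real p)
     \<and> (\<forall>j. \<bar>b j - pt q j\<bar> \<le> 1 / real p) \<and> a i \<le> f a i \<and> f b i \<le> b i"
    proof (cases "label r i = 0")
      case True
      then have "label s i = 1" using rs ls by simp
      then show ?thesis using True cr cs L0[of r i] L1[of s i] i ptC by blast
    next
      case False
      then have "label r i = 1" "label s i = 0" using rs lr ls by auto
      then show ?thesis using cr cs L0[of s i] L1[of r i] i ptC by blast
    qed
  qed
qed

lemma brouwer_nat:
  fixes f :: "(nat \<Rightarrow> real) \<Rightarrow> nat \<Rightarrow> real" and N :: nat
  assumes fC: "\<And>x i. x \<in> cube N \<Longrightarrow> i < N \<Longrightarrow> 0 \<le> f x i \<and> f x i \<le> 1"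
    and cont: "\<And>i. i < N \<Longrightarrow> continuous_on (cube N) (\<lambda>x. f x i)"
  shows "\<exists>z\<in>cube N. \<forall>i<N. f z i = z i"
proof -
  define Q where "Q k z i a b \<longleftrightarrow> a \<in> cube N \<and> b \<in> cube N \<and> (\<forall>j. \<bar>a j - z j\<bar> \<le> 1 / real (Suc k))
     \<and> (\<forall>j. \<bar>b j - z j\<bar> \<le> 1 / real (Suc k)) \<and> a i \<le> f a i \<and> f b i \<le> b i" for k z i a b
  have "\<forall>k. \<exists>z. z \<in> cube N \<and> (\<forall>i<N. \<exists>a b. Q k z i a b)"
  proof
    fix k
    show "\<exists>z. z \<in> cube N \<and> (\<forall>i<N. \<exists>a b. Q k z i a b)"
      using approx_fix[where f=f and N=N and p="Suc k", OF fC zero_less_Suc] unfolding Q_def by blast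
  qed
  then obtain Z where Z0: "\<forall>k. Z k \<in> cube N \<and> (\<forall>i<N. \<exists>a b. Q k (Z k) i a b)"
    by (rule choice[THEN exE]) blast
  then have Z: "\<And>k. Z k \<in> cube N" "\<And>k i. i < N \<Longrightarrow> \<exists>a b. Q k (Z k) i a b"
    by blast+
  have "\<forall>k. \<forall>i. \<exists>ab. i < N \<longrightarrow> Q k (Z k) i (fst ab) (snd ab)"
    using Z(2) by fastforce
  then have "\<forall>k. \<exists>g. \<forall>i. i < N \<longrightarrow> Q k (Z k) i (fst (g i)) (snd (g i))"
    by (intro allI choice) blast
  then obtain G where G0: "\<forall>k i. i < N \<longrightarrow> Q k (Z k) i (fst (G k i)) (snd (G k i))"
    by (rule choice[THEN exE]) blast
  then have G: "\<And>k i. i < N \<Longrightarrow> Q k (Z k) i (fst (G k i)) (snd (G k i))"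
    by blast
  have "seq_compact (cube N)" by (rule compact_imp_seq_compact[OF compact_cube])
  then obtain l \<phi> where l: "l \<in> cube N" and sm: "strict_mono \<phi>" and lim: "(Z \<circ> \<phi>) \<longlonglongrightarrow> l"
    unfolding seq_compact_def using Z(1) by metis
  show ?thesis
  proof (intro bexI[OF _ l] allI impI)
    fix i assume i: "i < N"
    define A where "A k = fst (G (\<phi> k) i)" for k
    define B where "B k = snd (G (\<phi> k) i)" for k
    have QA: "\<And>k. Q (\<phi> k) (Z (\<phi> k)) i (A k) (B k)" using G[OF i] by (simp add: A_def B_def)
    have Alim: "A \<longlonglongrightarrow> l" by (rule near_lim[OF lim sm]) (use QA in \<open>simp add: Q_def\<close>)
    have Blim: "B \<longlonglongrightarrow> l" by (rule near_lim[OF lim sm]) (use QA in \<open>simp add: Q_def\<close>)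
    have Ain: "\<forall>\<^sub>F k in sequentially. A k \<in> cube N" using QA by (simp add: Q_def)
    have Bin: "\<forall>\<^sub>F k in sequentially. B k \<in> cube N" using QA by (simp add: Q_def)
    have fA: "(\<lambda>k. f (A k) i) \<longlonglongrightarrow> f l i"
      by (rule continuous_on_tendsto_compose[OF cont[OF i] Alim l Ain])
    have fB: "(\<lambda>k. f (B k) i) \<longlonglongrightarrow> f l i"
      by (rule continuous_on_tendsto_compose[OF cont[OF i] Blim l Bin])
    have cA: "(\<lambda>k. A k i) \<longlonglongrightarrow> l i" by (rule tendsto_coord[OF Alim])
    have cB: "(\<lambda>k. B k i) \<longlonglongrightarrow> l i" by (rule tendsto_coord[OF Blim])
    have "l i \<le> f l i"
      by (rule tendsto_le[OF _ fA cA]) (use QA in \<open>simp_all add: Q_def\<close>)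
    moreover have "f l i \<le> l i"
      by (rule tendsto_le[OF _ cB fB]) (use QA in \<open>simp_all add: Q_def\<close>)
    ultimately show "f l i = l i" by simp
  qed
qed



definition Wt :: "nat \<Rightarrow> (nat\<Rightarrow>nat) \<Rightarrow> ((nat\<Rightarrow>nat)\<Rightarrow>nat\<Rightarrow>real) \<Rightarrow> (nat\<Rightarrow>nat\<Rightarrow>real) \<Rightarrow> nat \<Rightarrow> (nat\<Rightarrow>nat) \<Rightarrow> real" where
  "Wt n s P \<sigma> i v = (\<Prod>j\<in>{..<n}-{i}. \<sigma> j (v j)) * P v i"

definition Ut :: "nat \<Rightarrow> (nat\<Rightarrow>nat) \<Rightarrow> ((nat\<Rightarrow>nat)\<Rightarrow>nat\<Rightarrow>real) \<Rightarrow> (nat\<Rightarrow>nat\<Rightarrow>real) \<Rightarrow> nat \<Rightarrow> nat \<Rightarrow> real" where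
  "Ut n s P \<sigma> i b = (\<Sum>v\<in>positions n s. if v i = b then Wt n s P \<sigma> i v else 0)"

definition gain :: "nat \<Rightarrow> (nat\<Rightarrow>nat) \<Rightarrow> ((nat\<Rightarrow>nat)\<Rightarrow>nat\<Rightarrow>real) \<Rightarrow> (nat\<Rightarrow>nat\<Rightarrow>real) \<Rightarrow> nat \<Rightarrow> nat \<Rightarrow> real" where
  "gain n s P \<sigma> i b = max 0 (Ut n s P \<sigma> i b - exp_payoff n s P \<sigma> i)"

definition nmap :: "nat \<Rightarrow> (nat\<Rightarrow>nat) \<Rightarrow> ((nat\<Rightarrow>nat)\<Rightarrow>nat\<Rightarrow>real) \<Rightarrow> (nat\<Rightarrow>nat\<Rightarrow>real) \<Rightarrow> nat \<Rightarrow> nat \<Rightarrow> real" where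
  "nmap n s P \<sigma> = (\<lambda>i a. if i < n \<and> a < s i then
      (\<sigma> i a + gain n s P \<sigma> i a) / (1 + (\<Sum>b<s i. gain n s P \<sigma> i b)) else 0)"

definition retr :: "nat \<Rightarrow> (nat\<Rightarrow>nat) \<Rightarrow> nat \<Rightarrow> (nat \<Rightarrow> real) \<Rightarrow> nat \<Rightarrow> nat \<Rightarrow> real" where
  "retr n s m x = (\<lambda>i a. if i < n \<and> a < s i then
      (x (i*m+a) + max 0 (1 - (\<Sum>b<s i. x (i*m+b))))
        / ((\<Sum>b<s i. x (i*m+b)) + real (s i) * max 0 (1 - (\<Sum>b<s i. x (i*m+b)))) else 0)"

lemma finite_positions: "finite (positions n s)"
  unfolding positions_def by (simp add: finite_PiE)

lemma pos_mem: "v \<in> positions n s \<Longrightarrow> i < n \<Longrightarrow> v i < s i"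
  unfolding positions_def by (auto simp: PiE_iff)

lemma ep_split:
  assumes "i < n"
  shows "exp_payoff n s P \<sigma> i = (\<Sum>v\<in>positions n s. \<sigma> i (v i) * Wt n s P \<sigma> i v)"
  unfolding exp_payoff_def Wt_def
proof (rule sum.cong[OF refl])
  fix v
  have "(\<Prod>j<n. \<sigma> j (v j)) = \<sigma> i (v i) * (\<Prod>j\<in>{..<n}-{i}. \<sigma> j (v j))"
    using prod.remove[of "{..<n}" i "\<lambda>j. \<sigma> j (v j)"] assms by simp
  then show "(\<Prod>j<n. \<sigma> j (v j)) * P v i = \<sigma> i (v i) * ((\<Prod>j\<in>{..<n} - {i}. \<sigma> j (v j)) * P v i)"
    by simp
qed

lemma Wt_upd: "Wt n s P (\<sigma>(i:=\<tau>)) i v = Wt n s P \<sigma> i v"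
  unfolding Wt_def by (intro arg_cong2[where f="(*)"] prod.cong) auto


lemma sumU:
  assumes "i < n"
  shows "(\<Sum>v\<in>positions n s. \<tau> (v i) * Wt n s P \<sigma> i v) = (\<Sum>b<s i. \<tau> b * Ut n s P \<sigma> i b)"
proof -
  have "(\<Sum>b<s i. \<tau> b * Ut n s P \<sigma> i b)
      = (\<Sum>b<s i. \<Sum>v\<in>positions n s. (if v i = b then \<tau> b * Wt n s P \<sigma> i v else 0))"
    unfolding Ut_def sum_distrib_left by (intro sum.cong refl) simp
  also have "\<dots> = (\<Sum>v\<in>positions n s. \<Sum>b<s i. (if v i = b then \<tau> b * Wt n s P \<sigma> i v else 0))"
    by (rule sum.swap)
  also have "\<dots> = (\<Sum>v\<in>positions n s. \<tau> (v i) * Wt n s P \<sigma> i v)"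
    by (rule sum.cong[OF refl]) (simp add: sum.delta' pos_mem[OF _ assms])
  finally show ?thesis by simp
qed

lemma ep_dev:
  assumes "i < n"
  shows "exp_payoff n s P (\<sigma>(i:=\<tau>)) i = (\<Sum>b<s i. \<tau> b * Ut n s P \<sigma> i b)"
  using ep_split[OF assms, where s=s and P=P and \<sigma>="\<sigma>(i:=\<tau>)"] sumU[OF assms, where s=s and \<tau>=\<tau> and P=P and \<sigma>=\<sigma>]
  by (simp add: Wt_upd)

lemma ep_self:
  assumes "i < n"
  shows "exp_payoff n s P \<sigma> i = (\<Sum>b<s i. \<sigma> i b * Ut n s P \<sigma> i b)"
  using ep_split[OF assms, where s=s and P=P and \<sigma>=\<sigma>] sumU[OF assms, where s=s and \<tau>="\<sigma> i" and P=P and \<sigma>=\<sigma>]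
  by simp

lemma gain_nonneg: "0 \<le> gain n s P \<sigma> i b"
  by (simp add: gain_def)

lemma fix_nash:
  assumes prof: "profile n s \<sigma>"
    and fixp: "\<And>i a. i < n \<Longrightarrow> a < s i \<Longrightarrow> nmap n s P \<sigma> i a = \<sigma> i a"
  shows "nash n s P \<sigma>"
  unfolding nash_def
proof (intro conjI prof allI impI)
  fix i \<tau> assume i: "i < n" and tau: "mixed_strategy (s i) \<tau>"
  define u where "u = exp_payoff n s P \<sigma> i"
  define U where "U b = Ut n s P \<sigma> i b" for b
  define g where "g b = gain n s P \<sigma> i b" for b
  define G where "G = (\<Sum>b<s i. g b)"
  have ms: "mixed_strategy (s i) (\<sigma> i)" using prof i by (simp add: profile_def)
  have sig0: "\<And>a. 0 \<le> \<sigma> i a" and sig1: "(\<Sum>a<s i. \<sigma> i a) = 1"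
    using ms by (auto simp: mixed_strategy_def)
  have uself: "u = (\<Sum>b<s i. \<sigma> i b * U b)" unfolding u_def U_def by (rule ep_self[OF i])
  have G0: "0 \<le> G" unfolding G_def g_def by (simp add: sum_nonneg gain_nonneg)
  have "\<exists>a<s i. 0 < \<sigma> i a \<and> U a \<le> u"
  proof (rule ccontr)
    assume H: "\<not> ?thesis"
    obtain a0 where a0: "a0 < s i" "0 < \<sigma> i a0"
    proof (rule ccontr)
      assume "\<not> thesis"
      have "\<forall>a<s i. \<sigma> i a = 0"
      proof (intro allI impI)
        fix a assume "a < s i"
        then show "\<sigma> i a = 0" using sig0[of a] that[of a] \<open>\<not> thesis\<close> by force
      qed
      then have "(\<Sum>a<s i. \<sigma> i a) = 0" by simp
      then show False using sig1 by simp
    qed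
    have "u = (\<Sum>b<s i. \<sigma> i b * u)" using sig1 by (simp add: sum_distrib_right[symmetric])
    also have "\<dots> < (\<Sum>b<s i. \<sigma> i b * U b)"
    proof (rule sum_strict_mono_ex1)
      show "finite {..<s i}" by simp
      show "\<forall>x\<in>{..<s i}. \<sigma> i x * u \<le> \<sigma> i x * U x"
      proof
        fix x assume x: "x \<in> {..<s i}"
        show "\<sigma> i x * u \<le> \<sigma> i x * U x"
        proof (cases "\<sigma> i x = 0")
          case False
          then have "0 < \<sigma> i x" using sig0[of x] by simp
          then have "u < U x" using H x by auto
          then show ?thesis using \<open>0 < \<sigma> i x\<close> by simp
        qed simp
      qed
      show "\<exists>a\<in>{..<s i}. \<sigma> i a * u < \<sigma> i a * U a"
        using a0 H by (intro bexI[of _ a0]) auto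
    qed
    also have "\<dots> = u" using uself by simp
    finally show False by simp
  qed
  then obtain a where a: "a < s i" "0 < \<sigma> i a" "U a \<le> u" by blast
  have ga: "g a = 0" unfolding g_def gain_def using a(3) by (simp add: U_def u_def)
  have "nmap n s P \<sigma> i a = \<sigma> i a / (1 + G)"
    using i a(1) ga by (simp add: nmap_def G_def g_def)
  then have "\<sigma> i a / (1 + G) = \<sigma> i a" using fixp[OF i a(1)] by simp
  then have "\<sigma> i a = \<sigma> i a * (1 + G)" using G0 by (simp add: field_simps)
  then have "G = 0" using a(2) by (simp add: algebra_simps)
  then have "\<forall>b\<in>{..<s i}. g b = 0"
    unfolding G_def by (subst (asm) sum_nonneg_eq_0_iff) (auto simp: g_def gain_nonneg)
  then have Ule: "U b \<le> u" if "b < s i" for b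
  proof -
    have "max 0 (U b - u) = 0" using that \<open>\<forall>b\<in>{..<s i}. g b = 0\<close>
      by (simp add: g_def gain_def U_def u_def)
    then show "U b \<le> u" by (simp add: max_def split: if_splits)
  qed
  have "exp_payoff n s P (\<sigma>(i := \<tau>)) i = (\<Sum>b<s i. \<tau> b * U b)"
    unfolding U_def by (rule ep_dev[OF i])
  also have "\<dots> \<le> (\<Sum>b<s i. \<tau> b * u)"
    using tau Ule by (intro sum_mono mult_left_mono) (auto simp: mixed_strategy_def)
  also have "\<dots> = u" using tau by (simp add: mixed_strategy_def sum_distrib_right[symmetric])
  finally show "exp_payoff n s P (\<sigma>(i := \<tau>)) i \<le> exp_payoff n s P \<sigma> i" by (simp add: u_def)
qed



lemma den_ge1:
  fixes S :: real and k :: nat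
  assumes "1 \<le> k"
  shows "1 \<le> S + real k * max 0 (1 - S)"
proof (cases "S \<le> 1")
  case True
  have "1 * (1 - S) \<le> real k * (1 - S)" using assms True by (intro mult_right_mono) auto
  then show ?thesis using True by (simp add: max_def)
qed (simp add: max_def)

lemma retr_prof:
  assumes x0: "\<And>j. 0 \<le> x j" and s1: "\<forall>i<n. 1 \<le> s i"
  shows "profile n s (retr n s m x)"
  unfolding profile_def mixed_strategy_def
proof (intro conjI allI impI)
  fix i assume i: "i < n"
  fix a
  show "0 \<le> retr n s m x i a"
  proof (cases "a < s i")
    case True
    then have "1 \<le> s i" by simp
    have "1 \<le> (\<Sum>b<s i. x (i*m+b)) + real (s i) * max 0 (1 - (\<Sum>b<s i. x (i*m+b)))"
      by (rule den_ge1) fact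
    then show ?thesis using x0 i True
      by (auto simp: retr_def intro!: divide_nonneg_pos add_nonneg_nonneg)
  qed (simp add: retr_def)
next
  fix i a assume "i < n" "s i \<le> a"
  then show "retr n s m x i a = 0" by (simp add: retr_def)
next
  fix i assume i: "i < n"
  show "(\<Sum>a<s i. retr n s m x i a) = 1"
  proof -
    have si: "1 \<le> s i" using s1 i by simp
    define S where "S = (\<Sum>b<s i. x (i*m+b))"
    define t where "t = max 0 (1 - S)"
    have D: "1 \<le> S + real (s i) * t" unfolding t_def using den_ge1[OF si, of S] by simp
    have "(\<Sum>a<s i. retr n s m x i a) = (\<Sum>a<s i. (x (i*m+a) + t) / (S + real (s i) * t))"
      by (rule sum.cong[OF refl]) (simp add: retr_def i S_def t_def)
    also have "\<dots> = (\<Sum>a<s i. (x (i*m+a) + t)) / (S + real (s i) * t)"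
      by (simp add: sum_divide_distrib)
    also have "(\<Sum>a<s i. (x (i*m+a) + t)) = S + real (s i) * t"
      by (simp add: sum.distrib S_def)
    finally show ?thesis using D by simp
  qed
next
  fix i assume "n \<le> i"
  then show "retr n s m x i = (\<lambda>_. 0)" by (auto simp: retr_def)
qed

lemma nmap_prop:
  assumes prof: "profile n s \<sigma>" and i: "i < n"
  shows "(\<Sum>a<s i. nmap n s P \<sigma> i a) = 1" and "0 \<le> nmap n s P \<sigma> i a" and "nmap n s P \<sigma> i a \<le> 1"
proof -
  have ms: "mixed_strategy (s i) (\<sigma> i)" using prof i by (simp add: profile_def)
  have sig0: "\<And>a. 0 \<le> \<sigma> i a" and sig1: "(\<Sum>a<s i. \<sigma> i a) = 1"
    using ms by (auto simp: mixed_strategy_def)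
  define G where "G = (\<Sum>b<s i. gain n s P \<sigma> i b)"
  have G0: "0 \<le> G" unfolding G_def by (simp add: sum_nonneg gain_nonneg)
  have "(\<Sum>a<s i. nmap n s P \<sigma> i a) = (\<Sum>a<s i. (\<sigma> i a + gain n s P \<sigma> i a) / (1 + G))"
    by (rule sum.cong[OF refl]) (simp add: nmap_def i G_def)
  also have "\<dots> = (\<Sum>a<s i. (\<sigma> i a + gain n s P \<sigma> i a)) / (1 + G)"
    by (simp add: sum_divide_distrib)
  also have "(\<Sum>a<s i. (\<sigma> i a + gain n s P \<sigma> i a)) = 1 + G"
    by (simp add: sum.distrib sig1 G_def)
  finally show S1: "(\<Sum>a<s i. nmap n s P \<sigma> i a) = 1" using G0 by simp
  have nn: "0 \<le> nmap n s P \<sigma> i b" for b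
    using sig0 G0 by (auto simp: nmap_def G_def[symmetric] gain_nonneg intro!: divide_nonneg_pos add_nonneg_nonneg)
  then show "0 \<le> nmap n s P \<sigma> i a" .
  show "nmap n s P \<sigma> i a \<le> 1"
  proof (cases "a < s i")
    case True
    have "nmap n s P \<sigma> i a \<le> (\<Sum>a<s i. nmap n s P \<sigma> i a)"
      by (rule member_le_sum) (use True nn in auto)
    then show ?thesis using S1 by simp
  qed (simp add: nmap_def)
qed

lemma cont_retr [continuous_intros]: "continuous_on S (\<lambda>x. retr n s m x i a)"
proof (cases "i < n \<and> a < s i")
  case True
  then have s1: "1 \<le> s i" by simp
  have D: "(\<Sum>b<s i. x (i*m+b)) + real (s i) * max 0 (1 - (\<Sum>b<s i. x (i*m+b))) \<noteq> 0" for x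
    using den_ge1[OF s1, of "\<Sum>b<s i. x (i*m+b)"] by linarith
  show ?thesis
    unfolding retr_def using True
    by (simp, intro continuous_intros) (use D in simp)
next
  case False
  then have "retr n s m x i a = 0" for x by (auto simp: retr_def)
  then show ?thesis by simp
qed

lemma cont_if_const [continuous_intros]:
  "continuous_on S f \<Longrightarrow> continuous_on S g \<Longrightarrow> continuous_on S (\<lambda>x. if c then f x else g x)"
  by (cases c) auto

lemma cont_nmap:
  assumes F: "\<And>j b. continuous_on S (\<lambda>x. F x j b)"
  shows "continuous_on S (\<lambda>x. nmap n s P (F x) i a)"
proof (cases "i < n \<and> a < s i")
  case True
  have pos: "1 + (\<Sum>b<s i. gain n s P (F x) i b) \<noteq> 0" for x
    using sum_nonneg[of "{..<s i}" "\<lambda>b. gain n s P (F x) i b"] gain_nonneg by force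
  show ?thesis
    unfolding nmap_def using True
    apply simp
    unfolding gain_def Ut_def Wt_def exp_payoff_def
    apply (intro continuous_intros F)
    using pos unfolding gain_def Ut_def Wt_def exp_payoff_def by simp
next
  case False
  then have "nmap n s P (F x) i a = 0" for x by (auto simp: nmap_def)
  then show ?thesis by simp
qed

lemma nash_exists:
  assumes s1: "\<forall>i<n. 1 \<le> s i"
  shows "\<exists>\<sigma>. nash n s P \<sigma>"
proof -
  define m where "m = (\<Sum>i<n. s i)"
  have sm: "s i \<le> m" if "i < n" for i
    unfolding m_def using that by (intro member_le_sum) auto
  define N where "N = n * m"
  define F where "F x j = (if j < N then nmap n s P (retr n s m x) (j div m) (j mod m) else 0)" for x j
  have cube0: "0 \<le> x j" if "x \<in> cube N" for x j
  proof -
    from that have h: "(j<N \<longrightarrow> 0 \<le> x j \<and> x j \<le> 1) \<and> (N \<le> j \<longrightarrow> x j = 0)"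
      unfolding cube_def by blast
    then show ?thesis by (cases "j < N") auto
  qed
  have FC: "0 \<le> F x j \<and> F x j \<le> 1" if "x \<in> cube N" "j < N" for x j
  proof (cases "j div m < n")
    case True
    have pr: "profile n s (retr n s m x)" by (rule retr_prof[OF cube0[OF that(1)] s1])
    show ?thesis using nmap_prop(2,3)[OF pr True] that(2) by (simp add: F_def)
  next
    case False
    then show ?thesis using that(2) by (simp add: F_def nmap_def)
  qed
  have Fcont: "continuous_on (cube N) (\<lambda>x. F x j)" if "j < N" for j
  proof -
    have "continuous_on (cube N) (\<lambda>x. nmap n s P (retr n s m x) (j div m) (j mod m))"
      by (rule cont_nmap) (rule cont_retr)
    then show ?thesis using that by (simp add: F_def)
  qed
  obtain z where z: "z \<in> cube N" and fz: "\<And>j. j < N \<Longrightarrow> F z j = z j"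
    using brouwer_nat[of N F, OF FC Fcont] by blast
  define \<sigma> where "\<sigma> = retr n s m z"
  have prof: "profile n s \<sigma>" unfolding \<sigma>_def by (rule retr_prof[OF cube0[OF z] s1])
  have zi: "z (i*m+a) = nmap n s P \<sigma> i a" if i: "i < n" and a: "a < s i" for i a
  proof -
    have am: "a < m" using sm[OF i] a by simp
    have "i * m + a < Suc i * m" using am by simp
    also have "\<dots> \<le> n * m" using i by (intro mult_le_mono1) simp
    finally have lt: "i * m + a < N" by (simp add: N_def)
    have d: "(i*m+a) div m = i" and md: "(i*m+a) mod m = a" using am by auto
    show ?thesis using fz[OF lt] by (simp add: F_def lt d md \<sigma>_def am)
  qed
  have fixp: "nmap n s P \<sigma> i a = \<sigma> i a" if i: "i < n" and a: "a < s i" for i a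
  proof -
    have S1: "(\<Sum>b<s i. z (i*m+b)) = 1"
      using nmap_prop(1)[OF prof i, of P] zi[OF i] by simp
    have "\<sigma> i a = z (i*m+a)" unfolding \<sigma>_def retr_def using i a S1 by simp
    then show ?thesis using zi[OF i a] by simp
  qed
  show ?thesis using fix_nash[OF prof fixp] by blast
qed




lemma ADn_Suc: "ADn n s (Suc t) M = AD n s (ADn n s t M)"
  by (induction t arbitrary: M) auto

declare ADn.simps(2)[simp del]

lemma AD_single: "g \<in> X \<Longrightarrow> \<sigma> \<in> NME n s g \<Longrightarrow> u \<in> chi n s \<sigma> \<Longrightarrow> upd n g u \<in> AD n s X"
  unfolding AD_def by blast

lemma chi_pos: "chi n s \<sigma> \<subseteq> positions n s"
  unfolding chi_def positions_def supp_def by (rule PiE_mono) auto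

definition Erel :: "nat \<Rightarrow> (nat \<Rightarrow> nat) \<Rightarrow> (mgame \<times> mgame) set" where
  "Erel n s = {(g, upd n g u) | g \<sigma> u. \<sigma> \<in> NME n s g \<and> u \<in> chi n s \<sigma>}"

lemma AD_Image: "AD n s X = Erel n s `` X"
  unfolding AD_def Erel_def by blast

lemma ADn_relpow: "ADn n s t M = (Erel n s ^^ t) `` M"
proof (induction t)
  case 0 then show ?case by simp
next
  case (Suc t)
  have "ADn n s (Suc t) M = Erel n s `` ((Erel n s ^^ t) `` M)"
    by (simp add: ADn_Suc AD_Image Suc)
  also have "\<dots> = (Erel n s ^^ Suc t) `` M" by (auto simp: relcomp_Image)
  finally show ?case .
qed

definition cnt :: "nat \<Rightarrow> (nat \<Rightarrow> nat) \<Rightarrow> mgame \<Rightarrow> nat" where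
  "cnt n s h = card {v \<in> positions n s. upd n h v \<noteq> h}"


lemma upd_idem: "upd n (upd n h u) u = upd n h u"
  by (rule ext)+ (simp add: upd_def)

lemma upd_fix:
  assumes hv: "upd n h v = h" and vu: "v \<noteq> u"
  shows "upd n (upd n h u) v = upd n h u"
proof (rule ext)+
  fix k w j
  have hk: "h k v j = h 0 v j" if "1 \<le> k" "k \<le> n"
  proof -
    have "h k v j = upd n h v k v j" using hv by simp
    also have "\<dots> = h 0 v j" using that by (simp add: upd_def)
    finally show ?thesis .
  qed
  show "upd n (upd n h u) v k w j = upd n h u k w j"
    using vu hk by (auto simp: upd_def)
qed

lemma cnt_dec:
  assumes u: "u \<in> positions n s" and ne: "upd n h u \<noteq> h"
  shows "cnt n s (upd n h u) < cnt n s h"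
proof -
  let ?A = "{v \<in> positions n s. upd n (upd n h u) v \<noteq> upd n h u}"
  let ?B = "{v \<in> positions n s. upd n h v \<noteq> h}"
  have "?A \<subseteq> ?B - {u}"
    using upd_idem[of n h u] upd_fix[of n h _ u] by auto
  also have "\<dots> \<subset> ?B" using u ne by auto
  finally have "?A \<subset> ?B" .
  then show ?thesis unfolding cnt_def
    by (intro psubset_card_mono) (auto intro: finite_subset[OF _ finite_positions])
qed

lemma cnt_le: "cnt n s h \<le> card (positions n s)"
  unfolding cnt_def by (intro card_mono finite_positions) auto

lemma Erel_dec: "(x, z) \<in> Erel n s \<Longrightarrow> z \<noteq> x \<Longrightarrow> cnt n s z < cnt n s x"
  unfolding Erel_def using cnt_dec chi_pos by blast

lemma path_loop:
  "(x, y) \<in> Erel n s ^^ t \<Longrightarrow> cnt n s x < t \<Longrightarrow>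
     (x, y) \<in> Erel n s ^^ Suc t \<and> (x, y) \<in> Erel n s ^^ (t - 1)"
proof (induction t arbitrary: x)
  case 0 then show ?case by simp
next
  case (Suc t)
  obtain z where xz: "(x, z) \<in> Erel n s" and zy: "(z, y) \<in> Erel n s ^^ t"
    using relpow_Suc_D2[OF Suc.prems(1)] by blast
  show ?case
  proof (cases "z = x")
    case True
    show ?thesis using relpow_Suc_I2[OF xz[unfolded True] Suc.prems(1)] zy True by simp
  next
    case False
    have "cnt n s z < t" using Erel_dec[OF xz False] Suc.prems(2) by simp
    then have ih: "(z, y) \<in> Erel n s ^^ Suc t" "(z, y) \<in> Erel n s ^^ (t - 1)"
      using Suc.IH[OF zy] by auto
    have t1: "Suc (t - 1) = t" using \<open>cnt n s z < t\<close> by simp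
    show ?thesis
      using relpow_Suc_I2[OF xz ih(1)] relpow_Suc_I2[OF xz ih(2)] t1 by simp
  qed
qed

lemma stabilizes: "\<exists>t. ADn n s (Suc t) {mG} = ADn n s t {mG}"
proof
  let ?T = "Suc (card (positions n s))"
  have c: "cnt n s mG < ?T" using cnt_le[of n s mG] by simp
  show "ADn n s (Suc ?T) {mG} = ADn n s ?T {mG}"
    unfolding ADn_relpow
  proof
    show "(Erel n s ^^ Suc ?T) `` {mG} \<subseteq> (Erel n s ^^ ?T) `` {mG}"
      using path_loop[where x=mG and t="Suc ?T"] c by fastforce
    show "(Erel n s ^^ ?T) `` {mG} \<subseteq> (Erel n s ^^ Suc ?T) `` {mG}"
      using path_loop[where x=mG and t="?T"] c by fastforce
  qed
qed

lemma ADinf_stable: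
  "ADn n s (ADlength n s {mG} + k) {mG} = ADinf n s {mG}"
proof (induction k)
  case 0 then show ?case by (simp add: ADinf_def)
next
  case (Suc k)
  have L: "ADn n s (Suc (ADlength n s {mG})) {mG} = ADn n s (ADlength n s {mG}) {mG}"
    unfolding ADlength_def by (rule LeastI_ex[OF stabilizes])
  have "ADn n s (ADlength n s {mG} + Suc k) {mG} = AD n s (ADn n s (ADlength n s {mG} + k) {mG})"
    by (simp add: ADn_Suc)
  also have "\<dots> = AD n s (ADn n s (ADlength n s {mG}) {mG})" using Suc by (simp add: ADinf_def)
  also have "\<dots> = ADn n s (ADlength n s {mG}) {mG}" using L by (simp add: ADn_Suc)
  finally show ?case by (simp add: ADinf_def)
qed

lemma NME_nonempty:
  assumes s1: "\<forall>i<n. 1 \<le> s i"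
  shows "\<exists>\<sigma>. \<sigma> \<in> NME n s g"
proof -
  have "\<forall>i. \<exists>\<tau>. i < n \<longrightarrow> nash n s (g (Suc i)) \<tau>" using nash_exists[OF s1] by blast
  then obtain T where T: "\<And>i. i < n \<Longrightarrow> nash n s (g (Suc i)) (T i)" by metis
  define \<sigma> where "\<sigma> = (\<lambda>i. if i < n then T i i else (\<lambda>_. 0))"
  have "profile n s \<sigma>"
    unfolding profile_def \<sigma>_def using T by (auto simp: nash_def profile_def)
  moreover have "\<forall>i<n. \<exists>\<tau>. nash n s (g (Suc i)) \<tau> \<and> \<sigma> i = \<tau> i"
    using T by (auto simp: \<sigma>_def)
  ultimately show ?thesis unfolding NME_def by blast
qed

lemma chi_nonempty:
  assumes "\<sigma> \<in> NME n s g"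
  shows "\<exists>u. u \<in> chi n s \<sigma>"
proof -
  have "supp (s i) (\<sigma> i) \<noteq> {}" if i: "i < n" for i
  proof
    assume e: "supp (s i) (\<sigma> i) = {}"
    have "mixed_strategy (s i) (\<sigma> i)" using assms i by (simp add: NME_def profile_def)
    then have "(\<Sum>a<s i. \<sigma> i a) = 1" by (simp add: mixed_strategy_def)
    moreover have "\<forall>a<s i. \<sigma> i a = 0" using e by (auto simp: supp_def)
    ultimately show False by simp
  qed
  then have "chi n s \<sigma> \<noteq> {}" unfolding chi_def by (simp add: PiE_eq_empty_iff)
  then show ?thesis by blast
qed

theorem proposition19:
  fixes n :: nat and s :: "nat \<Rightarrow> nat" and mG :: mgame
  assumes "1 \<le> n"
    and "\<forall>i<n. 1 \<le> s i"
  shows "sinks n s mG \<subseteq> terminal_set n s mG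
    \<and> (\<forall>g\<in>sinks n s mG. \<forall>\<sigma>\<in>NME n s g. stable_eq n s mG \<sigma>)"
proof -
  have key: "upd n g u = g \<and> g \<in> AD n s {g} \<and> g \<in> ADinf n s {mG}"
    if g: "g \<in> sinks n s mG" and sg: "\<sigma> \<in> NME n s g" and u: "u \<in> chi n s \<sigma>" for g \<sigma> u
  proof -
    have gstar: "g \<in> ADstar n s {mG}" and c0: "card (out_nbrs' n s mG g) = 0"
      using g by (auto simp: sinks_def out_degree'_def)
    obtain t0 where t0: "g \<in> ADn n s t0 {mG}" using gstar by (auto simp: ADstar_def)
    have fin: "finite (out_nbrs' n s mG g)"
    proof (rule finite_subset)
      show "out_nbrs' n s mG g \<subseteq> upd n g ` positions n s"
        unfolding out_nbrs'_def adapt_edge_def using chi_pos by blast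
    qed (simp add: finite_positions)
    have empty: "out_nbrs' n s mG g = {}" using fin c0 by simp
    have loops: "upd n g v = g" if "\<tau> \<in> NME n s g" "v \<in> chi n s \<tau>" for \<tau> v
    proof (rule ccontr)
      assume ne: "upd n g v \<noteq> g"
      have "upd n g v \<in> ADn n s (Suc t0) {mG}"
        unfolding ADn_Suc by (rule AD_single[OF t0 that])
      then have "upd n g v \<in> ADstar n s {mG}" unfolding ADstar_def by blast
      moreover have "adapt_edge n s g (upd n g v)" unfolding adapt_edge_def using that by blast
      ultimately have "upd n g v \<in> out_nbrs' n s mG g" using ne by (simp add: out_nbrs'_def)
      then show False using empty by simp
    qed
    have ugg: "upd n g u = g" by (rule loops[OF sg u])
    have gAD: "g \<in> AD n s {g}" using AD_single[of g "{g}" \<sigma> n s u] sg u ugg by simp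
    have all: "g \<in> ADn n s (t0 + k) {mG}" for k
    proof (induction k)
      case 0 then show ?case using t0 by simp
    next
      case (Suc k)
      have "AD n s {g} \<subseteq> AD n s (ADn n s (t0 + k) {mG})"
        using Suc unfolding AD_def by blast
      then show ?case using gAD by (auto simp add: ADn_Suc)
    qed
    have "g \<in> ADn n s (ADlength n s {mG} + t0) {mG}"
      using all[of "ADlength n s {mG}"] by (simp add: add.commute)
    then have "g \<in> ADinf n s {mG}" using ADinf_stable by simp
    then show ?thesis using ugg gAD by simp
  qed
  show ?thesis
  proof (intro conjI subsetI ballI)
    fix g assume g: "g \<in> sinks n s mG"
    obtain \<sigma> where sg: "\<sigma> \<in> NME n s g" using NME_nonempty[OF assms(2)] by blast
    obtain u where u: "u \<in> chi n s \<sigma>" using chi_nonempty[OF sg] by blast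
    have "g \<in> ADstar n s {mG}" using g by (simp add: sinks_def)
    then show "g \<in> terminal_set n s mG"
      using key[OF g sg u] by (simp add: terminal_set_def)
  next
    fix g \<sigma> assume g: "g \<in> sinks n s mG" and sg: "\<sigma> \<in> NME n s g"
    obtain u where u: "u \<in> chi n s \<sigma>" using chi_nonempty[OF sg] by blast
    show "stable_eq n s mG \<sigma>"
      unfolding stable_eq_def
      using key[OF g sg u] key[OF g sg] sg by blast
  qed
qed

end
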